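(* Let $R\subseteq\{0,1\}^V$ be a delta matroid that is not basically binary, but such that every pinning $R_p$ with $\mathrm{dom}(p)\ne\emptyset$ is basically binary. Then there is $h:V\to\mathbb Z$ such that the $h$-maximisation $R_{h\text{-}\max}$ is equivalent (by renaming variables) to a flip $\mathrm{PM}_3^U$ of $\mathrm{PM}_3=\{(0,0,1),(0,1,0),(1,0,0)\}$ for some $U\subseteq\{1,2,3\}$.
   Context: $R$ is a delta matroid if for all $x,y\in R$ and all $i$ with $x_i\ne y_i$ there exists $j$ with $x_j\ne y_j$ (possibly $j=i$) such that $x^{\{i,j\}}\in R$, where $x^U$ is $x$ with coordinates in $U$ flipped. A relation is basically binary if it is equivalent (up to renaming variables) to a Cartesian product of relations of arity at most two. A partial configuration $p$ is an element of $\{0,1\}^{\mathrm{dom}(p)}$ with $\mathrm{dom}(p)\subseteq V$, and $R_p=\{x\in\{0,1\}^{V\setminus\mathrm{dom}(p)}:(x,p)\in R\}$. For $h:V\to\mathbb Z$, $R_{h\text{-}\max}=\{x\in R:\sum_i h_ix_i=\max_{y\in R}\sum_ih_iy_i\}$. The flip of a relation $S$ is $S^U=\{x: x^U\in S\}$. *)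

theory Defs
  imports Main
begin

text \<open>Configurations on a finite variable set D: Boolean functions (True = 1) that are
  False outside D, i.e. elements of {0,1}^D represented extensionally.\<close>
definition conf :: "'v set \<Rightarrow> ('v \<Rightarrow> bool) set" where
  "conf D = {x. \<forall>i. i \<notin> D \<longrightarrow> \<not> x i}"

definition flip :: "('v \<Rightarrow> bool) \<Rightarrow> 'v set \<Rightarrow> ('v \<Rightarrow> bool)" where
  "flip x U = (\<lambda>k. if k \<in> U then \<not> x k else x k)"

definition delta_matroid :: "('v \<Rightarrow> bool) set \<Rightarrow> bool" where
  "delta_matroid R \<longleftrightarrow>
     (\<forall>x\<in>R. \<forall>y\<in>R. \<forall>i. x i \<noteq> y i \<longrightarrow>
        (\<exists>j. x j \<noteq> y j \<and> flip x {i, j} \<in> R))"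

definition restr :: "('v \<Rightarrow> bool) \<Rightarrow> 'v set \<Rightarrow> ('v \<Rightarrow> bool)" where
  "restr x B = (\<lambda>i. if i \<in> B then x i else False)"

text \<open>Basically binary: (up to renaming variables) a Cartesian product of relations of
  arity at most two, i.e. there is a partition of V into blocks of size at most 2 and
  relations on the blocks whose product is R.  (Empty blocks, i.e. arity-0 relations,
  are allowed.)\<close>
definition basically_binary :: "'v set \<Rightarrow> ('v \<Rightarrow> bool) set \<Rightarrow> bool" where
  "basically_binary V R \<longleftrightarrow>
     (\<exists>P S. (\<forall>B\<in>P. B \<subseteq> V \<and> card B \<le> 2 \<and> S B \<subseteq> conf B) \<and> \<Union>P = V \<and>
            (\<forall>B\<in>P. \<forall>C\<in>P. B \<noteq> C \<longrightarrow> B \<inter> C = {}) \<and>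
            R = {x \<in> conf V. \<forall>B\<in>P. restr x B \<in> S B})"

definition pinning :: "'v set \<Rightarrow> ('v \<Rightarrow> bool) \<Rightarrow> ('v \<Rightarrow> bool) set \<Rightarrow> ('v \<Rightarrow> bool) set" where
  "pinning D p R = {x. (\<forall>i. i \<in> D \<longrightarrow> \<not> x i) \<and> (\<lambda>i. if i \<in> D then p i else x i) \<in> R}"

definition weight :: "'v set \<Rightarrow> ('v \<Rightarrow> int) \<Rightarrow> ('v \<Rightarrow> bool) \<Rightarrow> int" where
  "weight V h x = (\<Sum>i\<in>V. h i * of_bool (x i))"

definition hmax :: "'v set \<Rightarrow> ('v \<Rightarrow> int) \<Rightarrow> ('v \<Rightarrow> bool) set \<Rightarrow> ('v \<Rightarrow> bool) set" where
  "hmax V h R = {x \<in> R. weight V h x = Max (weight V h ` R)}"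

definition flip_rel :: "('v \<Rightarrow> bool) set \<Rightarrow> 'v set \<Rightarrow> ('v \<Rightarrow> bool) set" where
  "flip_rel S U = {x. flip x U \<in> S}"

definition equiv_rel :: "'v set \<Rightarrow> ('v \<Rightarrow> bool) set \<Rightarrow> 'w set \<Rightarrow> ('w \<Rightarrow> bool) set \<Rightarrow> bool" where
  "equiv_rel V R W S \<longleftrightarrow>
     (\<exists>\<pi>. bij_betw \<pi> V W \<and>
        R = (\<lambda>y v. if v \<in> V then y (\<pi> v) else False) ` (S \<inter> conf W))"

text \<open>PM_3 = {(0,0,1),(0,1,0),(1,0,0)} on variables 1,2,3.\<close>
definition PM3 :: "(nat \<Rightarrow> bool) set" where
  "PM3 = {(\<lambda>i. i = 3), (\<lambda>i. i = 2), (\<lambda>i. i = 1)}"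

end

theory Submission
  imports Defs
begin


definition edge :: "('v \<Rightarrow> bool) set \<Rightarrow> ('v \<Rightarrow> bool) \<Rightarrow> 'v \<Rightarrow> 'v \<Rightarrow> bool" where
  "edge R F u v \<longleftrightarrow> flip F {u,v} \<in> R \<and> \<not> (flip F {u} \<in> R \<and> flip F {v} \<in> R)"

lemma edge_neq: "edge R F u v \<Longrightarrow> u \<noteq> v"
  by (auto simp: edge_def)

lemma edge_sym: "edge R F u v \<Longrightarrow> edge R F v u"
  by (auto simp: edge_def insert_commute)

lemma conf_out: "x \<in> conf V \<Longrightarrow> i \<notin> V \<Longrightarrow> \<not> x i"
  by (auto simp: conf_def)

lemma edge_in: assumes "R \<subseteq> conf V" "F \<in> R" "edge R F u v" shows "u \<in> V" "v \<in> V"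
proof -
  have f: "flip F {u,v} \<in> conf V" using assms by (auto simp: edge_def)
  show "u \<in> V"
  proof (rule ccontr)
    assume "u \<notin> V"
    then have "\<not> F u" "\<not> flip F {u,v} u" using assms f by (auto simp: conf_def)
    then show False by (simp add: flip_def)
  qed
  show "v \<in> V"
  proof (rule ccontr)
    assume "v \<notin> V"
    then have "\<not> F v" "\<not> flip F {u,v} v" using assms f by (auto simp: conf_def)
    then show False by (simp add: flip_def)
  qed
qed

lemma sep:
  assumes fin: "finite V" and sub: "R \<subseteq> conf V" and dm: "delta_matroid R"
    and noedge: "\<And>F i j. F \<in> R \<Longrightarrow> i \<in> A \<Longrightarrow> j \<notin> A \<Longrightarrow> \<not> edge R F i j"
  shows "x \<in> R \<Longrightarrow> y \<in> R \<Longrightarrow> (\<lambda>t. if t \<in> A then x t else y t) \<in> R"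
proof (induction "card {t\<in>V. t \<notin> A \<and> x t \<noteq> y t}" arbitrary: x rule: less_induct)
  case less
  let ?D = "\<lambda>x. {t\<in>V. t \<notin> A \<and> x t \<noteq> y t}"
  show ?case
  proof (cases "?D x = {}")
    case True
    have "(\<lambda>t. if t \<in> A then x t else y t) = x"
    proof
      fix t show "(if t \<in> A then x t else y t) = x t"
      proof (cases "t \<in> V")
        case True then show ?thesis using \<open>?D x = {}\<close> by auto
      next
        case False then show ?thesis using less.prems sub by (auto simp: conf_def)
      qed
    qed
    then show ?thesis using less.prems by simp
  next
    case False
    then obtain i where i: "i \<in> V" "i \<notin> A" "x i \<noteq> y i" by blast
    have "\<exists>j. x j \<noteq> y j \<and> flip x {i,j} \<in> R"
      using dm less.prems i(3) unfolding delta_matroid_def by metis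
    then obtain j where j: "x j \<noteq> y j" "flip x {i,j} \<in> R" by blast
    show ?thesis
    proof (cases "j \<in> A")
      case False
      let ?x = "flip x {i,j}"
      have sub1: "?D ?x \<subseteq> ?D x - {i}" using i j False by (auto simp: flip_def)
      have "card (?D ?x) < card (?D x)"
      proof -
        have "card (?D x - {i}) < card (?D x)" using fin i by (intro card_Diff1_less) auto
        moreover have "card (?D ?x) \<le> card (?D x - {i})" by (rule card_mono[OF _ sub1]) (use fin in auto)
        ultimately show ?thesis by linarith
      qed
      from less.hyps[OF this j(2) less.prems(2)]
      have "(\<lambda>t. if t \<in> A then ?x t else y t) \<in> R" .
      moreover have "(\<lambda>t. if t \<in> A then ?x t else y t) = (\<lambda>t. if t \<in> A then x t else y t)"
        using i False by (auto simp: flip_def)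
      ultimately show ?thesis by simp
    next
      case True
      have "\<not> edge R x j i" using noedge less.prems True i by blast
      then have xi: "flip x {i} \<in> R" using j by (auto simp: edge_def insert_commute)
      let ?x = "flip x {i}"
      have sub1: "?D ?x \<subseteq> ?D x - {i}" using i by (auto simp: flip_def)
      have "card (?D ?x) < card (?D x)"
      proof -
        have "card (?D x - {i}) < card (?D x)" using fin i by (intro card_Diff1_less) auto
        moreover have "card (?D ?x) \<le> card (?D x - {i})" by (rule card_mono[OF _ sub1]) (use fin in auto)
        ultimately show ?thesis by linarith
      qed
      from less.hyps[OF this xi less.prems(2)]
      have "(\<lambda>t. if t \<in> A then ?x t else y t) \<in> R" .
      moreover have "(\<lambda>t. if t \<in> A then ?x t else y t) = (\<lambda>t. if t \<in> A then x t else y t)"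
        using i by (auto simp: flip_def)
      ultimately show ?thesis by simp
    qed
  qed
qed

lemma bb_empty: "basically_binary V {}"
  unfolding basically_binary_def
proof (intro exI[of _ "insert {} ((\<lambda>u. {u}) ` V)"] exI[of _ "\<lambda>_. {}"] conjI)
qed (auto simp: conf_def)

definition nopath :: "('v \<Rightarrow> bool) set \<Rightarrow> bool" where
  "nopath R \<longleftrightarrow> (\<forall>F1\<in>R. \<forall>F2\<in>R. \<forall>u v w. u \<noteq> w \<longrightarrow> \<not> (edge R F1 u v \<and> edge R F2 v w))"

lemma nopath_bb:
  assumes fin: "finite V" and sub: "R \<subseteq> conf V" and dm: "delta_matroid R" and np: "nopath R"
  shows "basically_binary V R"
proof (cases "R = {}")
  case True then show ?thesis by (simp add: bb_empty)
next
  case False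
  then obtain r where r: "r \<in> R" by blast
  define E where "E u v \<longleftrightarrow> (\<exists>F\<in>R. edge R F u v)" for u v
  have Esym: "E u v \<Longrightarrow> E v u" for u v unfolding E_def by (metis edge_sym)
  have EV: "E u v \<Longrightarrow> u \<in> V \<and> v \<in> V" for u v unfolding E_def by (metis edge_in[OF sub])
  have Eneq: "E u v \<Longrightarrow> u \<noteq> v" for u v unfolding E_def by (metis edge_neq)
  have Euniq: "E a b \<Longrightarrow> E a c \<Longrightarrow> b = c" for a b c
  proof -
    assume "E a b" "E a c"
    then obtain F G where FG: "F \<in> R" "G \<in> R" "edge R F a b" "edge R G a c"
      unfolding E_def by blast
    have "edge R F b a" using FG(3) by (rule edge_sym)
    then show "b = c" using np FG(1,2,4) unfolding nopath_def by blast
  qed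
  define blk where "blk u = insert u {v. E u v}" for u
  define P where "P = blk ` V"
  define S where "S B = (\<lambda>y. restr y B) ` R" for B
  have blk_sub: "blk u \<subseteq> V" if "u \<in> V" for u using that EV unfolding blk_def by auto
  have blk_card: "card (blk u) \<le> 2" for u
  proof (cases "\<exists>v. E u v")
    case True
    then obtain v where v: "E u v" by blast
    then have "blk u = {u, v}" using Euniq unfolding blk_def by auto
    then show ?thesis by (simp add: card_insert_le_m1)
  next
    case False
    then have "blk u = {u}" unfolding blk_def by auto
    then show ?thesis by simp
  qed
  have blk_same: "t \<in> blk u \<Longrightarrow> blk t = blk u" for t u
  proof -
    assume t: "t \<in> blk u"
    show "blk t = blk u"
    proof (cases "t = u")
      case True then show ?thesis by simp
    next
      case False
      then have tu: "E u t" using t unfolding blk_def by auto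
      then have "blk u = {u, t}" using Euniq unfolding blk_def by auto
      moreover have "blk t = {t, u}" using Euniq Esym tu unfolding blk_def by auto
      ultimately show ?thesis by auto
    qed
  qed
  have noedge: "\<not> edge R F i j" if FR: "F \<in> R" and BP: "B \<in> P" and iB: "i \<in> B" and jB: "j \<notin> B" for F i j B
  proof
    assume e: "edge R F i j"
    then have Eij: "E i j" using FR unfolding E_def by blast
    obtain u where u: "B = blk u" using BP unfolding P_def by blast
    have "blk i = B" using blk_same[of i u] iB u by simp
    then have "j \<in> B" using Eij unfolding blk_def by auto
    then show False using jB by simp
  qed
  have sepB: "(\<lambda>t. if t \<in> B then x t else y t) \<in> R" if "B \<in> P" "x \<in> R" "y \<in> R" for B x y
    using sep[OF fin sub dm, of B x y] noedge that by blast
  have prod: "x \<in> R" if x: "x \<in> conf V" "\<forall>B\<in>P. restr x B \<in> S B" for x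
  proof -
    have finP: "finite P" using fin unfolding P_def by simp
    have "finite Q \<Longrightarrow> Q \<subseteq> P \<Longrightarrow> (\<lambda>t. if t \<in> \<Union>Q then x t else r t) \<in> R" for Q
    proof (induction Q rule: finite_induct)
      case empty then show ?case using r by simp
    next
      case (insert B Q)
      then have BP: "B \<in> P" and QP: "Q \<subseteq> P" by auto
      have "restr x B \<in> S B" using x BP by blast
      then obtain w where w: "w \<in> R" "restr w B = restr x B" unfolding S_def by auto
      have wx: "t \<in> B \<Longrightarrow> w t = x t" for t using fun_cong[OF w(2), of t] by (simp add: restr_def)
      have "(\<lambda>t. if t \<in> B then w t else (\<lambda>t. if t \<in> \<Union>Q then x t else r t) t) \<in> R"
        using sepB[OF BP w(1) insert.IH[OF QP]] .
      moreover have "(\<lambda>t. if t \<in> B then w t else (\<lambda>t. if t \<in> \<Union>Q then x t else r t) t)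
          = (\<lambda>t. if t \<in> \<Union>(insert B Q) then x t else r t)"
        using wx by auto
      ultimately show ?case by simp
    qed
    from this[OF finP] have "(\<lambda>t. if t \<in> \<Union>P then x t else r t) \<in> R" by simp
    moreover have "(\<lambda>t. if t \<in> \<Union>P then x t else r t) = x"
    proof
      fix t
      have UP: "\<Union>P = V" using blk_sub unfolding P_def blk_def by auto
      show "(if t \<in> \<Union>P then x t else r t) = x t"
        using x(1) r sub UP by (auto simp: conf_def)
    qed
    ultimately show ?thesis by simp
  qed
  show ?thesis
    unfolding basically_binary_def
  proof (intro exI[of _ P] exI[of _ S] conjI ballI impI)
    fix B assume "B \<in> P"
    then obtain u where u: "u \<in> V" "B = blk u" unfolding P_def by blast
    show "B \<subseteq> V" using blk_sub u by simp
    show "card B \<le> 2" using blk_card u by simp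
    show "S B \<subseteq> conf B" unfolding S_def by (auto simp: conf_def restr_def)
  next
    show "\<Union>P = V" using blk_sub unfolding P_def blk_def by auto
  next
    fix B C assume BC: "B \<in> P" "C \<in> P" "B \<noteq> C"
    show "B \<inter> C = {}"
    proof (rule ccontr)
      assume "B \<inter> C \<noteq> {}"
      then obtain t where t: "t \<in> B" "t \<in> C" by blast
      obtain u u' where uu: "B = blk u" "C = blk u'" using BC unfolding P_def by blast
      have "blk t = B" using blk_same[of t u] t uu by simp
      moreover have "blk t = C" using blk_same[of t u'] t uu by simp
      ultimately have "B = C" by simp
      then show False using BC by simp
    qed
  next
    show "R = {x \<in> conf V. \<forall>B\<in>P. restr x B \<in> S B}"
      using prod sub unfolding S_def by auto
  qed
qed


definition mix :: "'v set \<Rightarrow> ('v \<Rightarrow> bool) \<Rightarrow> ('v \<Rightarrow> bool) \<Rightarrow> ('v \<Rightarrow> bool)" where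
  "mix B F G = (\<lambda>t. if t \<in> B then F t else G t)"

locale bbw =
  fixes W :: "'v set" and T :: "('v \<Rightarrow> bool) set" and P :: "'v set set" and S
  assumes T: "T = {x \<in> conf W. \<forall>B\<in>P. restr x B \<in> S B}"
    and disj: "\<And>B C. B \<in> P \<Longrightarrow> C \<in> P \<Longrightarrow> B \<noteq> C \<Longrightarrow> B \<inter> C = {}"
    and UP: "\<Union>P = W"
begin

lemma Tsub: "T \<subseteq> conf W" using T by auto

lemma restr_other: "B \<in> P \<Longrightarrow> C \<in> P \<Longrightarrow> B \<noteq> C \<Longrightarrow> restr (mix B H G) C = restr G C"
  using disj[of B C] by (auto simp: restr_def mix_def fun_eq_iff)

lemma restr_same: "restr (mix B H G) B = restr H B"
  by (auto simp: restr_def mix_def fun_eq_iff)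

lemma mix_conf: "H \<in> conf W \<Longrightarrow> G \<in> conf W \<Longrightarrow> mix B H G \<in> conf W"
  by (auto simp: conf_def mix_def)

lemma mix_iff: assumes "B \<in> P" "H \<in> conf W" "G \<in> T"
  shows "mix B H G \<in> T \<longleftrightarrow> restr H B \<in> S B"
proof
  assume "mix B H G \<in> T"
  then show "restr H B \<in> S B" using assms(1) T restr_same[of B H G] by auto
next
  assume h: "restr H B \<in> S B"
  have "G \<in> conf W" using assms Tsub by auto
  moreover have "\<forall>C\<in>P. restr (mix B H G) C \<in> S C"
  proof
    fix C assume C: "C \<in> P"
    show "restr (mix B H G) C \<in> S C"
    proof (cases "C = B")
      case True then show ?thesis using h by (simp add: restr_same)
    next
      case False then show ?thesis using restr_other[OF assms(1) C] assms(3) T C by auto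
    qed
  qed
  ultimately show "mix B H G \<in> T" using T mix_conf assms(2) by auto
qed

lemma block: assumes F: "F \<in> T" and e: "edge T F u v" and B: "B \<in> P" "u \<in> B" shows "v \<in> B"
proof (rule ccontr)
  assume vB: "v \<notin> B"
  have uW: "u \<in> W" and vW: "v \<in> W" using edge_in[OF Tsub F e] by auto
  then obtain C where C: "C \<in> P" "v \<in> C" using UP by auto
  have CB: "C \<noteq> B" using C vB by auto
  have f2: "flip F {u,v} \<in> T" using e by (simp add: edge_def)
  have Fc: "F \<in> conf W" using F Tsub by auto
  have "flip F {u} = mix B (flip F {u,v}) F"
    using vB B by (auto simp: mix_def flip_def fun_eq_iff)
  moreover have "mix B (flip F {u,v}) F \<in> T"
  proof -
    have "restr (flip F {u,v}) B \<in> S B" using f2 T B(1) by auto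
    moreover have "flip F {u,v} \<in> conf W" using f2 Tsub by auto
    ultimately show ?thesis using mix_iff[OF B(1) _ F] by simp
  qed
  ultimately have 1: "flip F {u} \<in> T" by simp
  have uC: "u \<notin> C" using disj[OF B(1) C(1)] CB B(2) by auto
  have "flip F {v} = mix C (flip F {u,v}) F"
    using uC C by (auto simp: mix_def flip_def fun_eq_iff)
  moreover have "mix C (flip F {u,v}) F \<in> T"
  proof -
    have "restr (flip F {u,v}) C \<in> S C" using f2 T C(1) by auto
    moreover have "flip F {u,v} \<in> conf W" using f2 Tsub by auto
    ultimately show ?thesis using mix_iff[OF C(1) _ F] by simp
  qed
  ultimately have 2: "flip F {v} \<in> T" by simp
  show False using 1 2 e by (simp add: edge_def)
qed

lemma flip_mix: "X \<subseteq> B \<Longrightarrow> flip (mix B F G) X = mix B (flip F X) G"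
  by (auto simp: flip_def mix_def fun_eq_iff)

lemma flip_conf: "F \<in> conf W \<Longrightarrow> X \<subseteq> W \<Longrightarrow> flip F X \<in> conf W"
  by (auto simp: flip_def conf_def)

lemma mix_memT: assumes B: "B \<in> P" and F: "F \<in> T" and G: "G \<in> T" and X: "X \<subseteq> B"
  shows "flip (mix B F G) X \<in> T \<longleftrightarrow> flip F X \<in> T"
proof -
  have BW: "B \<subseteq> W" using B UP by auto
  have Fc: "flip F X \<in> conf W" using flip_conf F Tsub X BW by blast
  have "flip (mix B F G) X \<in> T \<longleftrightarrow> restr (flip F X) B \<in> S B"
    using flip_mix[OF X] mix_iff[OF B Fc G] by simp
  also have "\<dots> \<longleftrightarrow> mix B (flip F X) F \<in> T" using mix_iff[OF B Fc F] by simp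
  also have "mix B (flip F X) F = flip F X" using X by (auto simp: mix_def flip_def fun_eq_iff)
  finally show ?thesis .
qed

lemma mix_edge: assumes B: "B \<in> P" and F: "F \<in> T" and G: "G \<in> T" and uv: "u \<in> B" "v \<in> B"
  shows "mix B F G \<in> T" "edge T (mix B F G) u v \<longleftrightarrow> edge T F u v"
proof -
  have "restr F B \<in> S B" using F B T by auto
  then show "mix B F G \<in> T" using mix_iff[OF B _ G] F Tsub by auto
  show "edge T (mix B F G) u v \<longleftrightarrow> edge T F u v"
    unfolding edge_def using mix_memT[OF B F G] uv by simp
qed

end

lemma bbw_of: "basically_binary W T \<Longrightarrow> \<exists>P S. bbw W T P S \<and> (\<forall>B\<in>P. B \<subseteq> W \<and> card B \<le> 2)"
  unfolding basically_binary_def bbw_def by blast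


definition sl :: "'v \<Rightarrow> bool \<Rightarrow> ('v \<Rightarrow> bool) set \<Rightarrow> ('v \<Rightarrow> bool) set" where
  "sl z c R = pinning {z} (\<lambda>t. t = z \<and> c) R"

lemma sl_mem: "H z = c \<Longrightarrow> (H \<in> R \<longleftrightarrow> H(z:=False) \<in> sl z c R)"
proof -
  assume h: "H z = c"
  have "(\<lambda>i. if i \<in> {z} then (i = z \<and> c) else (H(z:=False)) i) = H" using h by (auto simp: fun_eq_iff)
  then show ?thesis unfolding sl_def pinning_def by auto
qed

lemma flip_upd: "z \<notin> X \<Longrightarrow> flip (H(z:=False)) X = (flip H X)(z:=False)"
  by (auto simp: flip_def fun_eq_iff)

lemma flip_at: "z \<notin> X \<Longrightarrow> flip H X z = H z"
  by (auto simp: flip_def)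

lemma sl_edge: assumes "H z = c" "u \<noteq> z" "v \<noteq> z"
  shows "edge R H u v \<longleftrightarrow> edge (sl z c R) (H(z:=False)) u v"
proof -
  have m: "flip H X \<in> R \<longleftrightarrow> flip (H(z:=False)) X \<in> sl z c R" if "z \<notin> X" for X
    using sl_mem[of "flip H X" z c R] flip_upd[OF that, of H] flip_at[OF that, of H] assms(1) by simp
  show ?thesis unfolding edge_def using m assms by simp
qed

lemma mix_upd: "z \<notin> B \<Longrightarrow> (mix B F G)(z:=False) = mix B (F(z:=False)) (G(z:=False))"
  by (auto simp: mix_def fun_eq_iff)

context
  fixes V :: "'v set" and R :: "('v \<Rightarrow> bool) set"
  assumes fin: "finite V" and sub: "R \<subseteq> conf V"
    and hyp: "\<And>z c. z \<in> V \<Longrightarrow> basically_binary (V - {z}) (sl z c R)"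
begin

lemma L1:
  assumes z: "z \<in> V" and F: "F1 \<in> R" "F2 \<in> R" "F1 z = F2 z"
    and d: "u \<noteq> w" "z \<noteq> u" "z \<noteq> v" "z \<noteq> w"
    and e: "edge R F1 u v" "edge R F2 v w"
  shows False
proof -
  define c where "c = F1 z"
  obtain P S where bw: "bbw (V - {z}) (sl z c R) P S" and PB: "\<forall>B\<in>P. B \<subseteq> V - {z} \<and> card B \<le> 2"
    using bbw_of[OF hyp[OF z, of c]] by blast
  interpret bbw "V - {z}" "sl z c R" P S by (rule bw)
  have F1': "F1(z:=False) \<in> sl z c R" using sl_mem[of F1 z c R] F c_def by simp
  have F2': "F2(z:=False) \<in> sl z c R" using sl_mem[of F2 z c R] F c_def by simp
  have e1: "edge (sl z c R) (F1(z:=False)) v u"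
    using sl_edge[of F1 z c v u R] edge_sym[OF e(1)] c_def d by simp
  have e2: "edge (sl z c R) (F2(z:=False)) v w"
    using sl_edge[of F2 z c v w R] e(2) c_def d F by simp
  have "v \<in> V" using edge_in[OF sub F(2) e(2)] by simp
  then obtain B where B: "B \<in> P" "v \<in> B" using UP d by auto
  have uB: "u \<in> B" using block[OF F1' e1 B] .
  have wB: "w \<in> B" using block[OF F2' e2 B] .
  have "finite B" using PB B fin finite_subset by blast
  then have "card {u,v,w} \<le> card B" using uB wB B by (intro card_mono) auto
  moreover have "card {u,v,w} = 3" using d edge_neq[OF e(1)] edge_neq[OF e(2)] by simp
  ultimately show False using PB B by fastforce
qed

lemma L2:
  assumes z: "z \<in> V" and F: "F \<in> R" "G \<in> R" "F z = G z"
    and d: "z \<noteq> u" "z \<noteq> v" and e: "edge R F u v"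
  shows "mix {u,v} F G \<in> R \<and> edge R (mix {u,v} F G) u v"
proof -
  define c where "c = F z"
  obtain P S where bw: "bbw (V - {z}) (sl z c R) P S" and PB: "\<forall>B\<in>P. B \<subseteq> V - {z} \<and> card B \<le> 2"
    using bbw_of[OF hyp[OF z, of c]] by blast
  interpret bbw "V - {z}" "sl z c R" P S by (rule bw)
  have F': "F(z:=False) \<in> sl z c R" using sl_mem[of F z c R] F c_def by simp
  have G': "G(z:=False) \<in> sl z c R" using sl_mem[of G z c R] F c_def by simp
  have e1: "edge (sl z c R) (F(z:=False)) u v"
    using sl_edge[of F z c u v R] e c_def d by simp
  have "u \<in> V" using edge_in[OF sub F(1) e] by simp
  then obtain B where B: "B \<in> P" "u \<in> B" using UP d by auto
  have vB: "v \<in> B" using block[OF F' e1 B] .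
  have "finite B" using PB B fin finite_subset by blast
  moreover have "{u,v} \<subseteq> B" using B vB by auto
  moreover have "card {u,v} = 2" using edge_neq[OF e] by simp
  ultimately have Beq: "B = {u,v}" using PB B
    by (metis card_seteq)
  have zB: "z \<notin> B" using PB B by auto
  have m: "mix B (F(z:=False)) (G(z:=False)) \<in> sl z c R"
    and me: "edge (sl z c R) (mix B (F(z:=False)) (G(z:=False))) u v"
    using mix_edge[OF B(1) F' G' B(2) vB] e1 by auto
  have mz: "mix {u,v} F G z = c" using d F c_def by (simp add: mix_def)
  have "mix {u,v} F G \<in> R" using sl_mem[of "mix {u,v} F G" z c R] mz m mix_upd[OF zB] Beq by simp
  moreover have "edge R (mix {u,v} F G) u v"
    using sl_edge[of "mix {u,v} F G" z c u v R] mz me mix_upd[OF zB] Beq d by simp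
  ultimately show ?thesis by simp
qed

lemma nopath_big:
  assumes dm: "delta_matroid R" and c4: "card V \<ge> 4"
  shows "nopath R"
  unfolding nopath_def
proof (intro ballI allI impI notI)
  fix F1 F2 u v w
  assume F: "F1 \<in> R" "F2 \<in> R" and uw: "u \<noteq> w" and ee: "edge R F1 u v \<and> edge R F2 v w"
  then have e1: "edge R F1 u v" and e2: "edge R F2 v w" by auto
  have uv: "u \<noteq> v" "v \<noteq> w" using edge_neq[OF e1] edge_neq[OF e2] by auto
  have inV: "u \<in> V" "v \<in> V" "w \<in> V" using edge_in[OF sub F(1) e1] edge_in[OF sub F(2) e2] by auto
  have "\<not> V \<subseteq> {u,v,w}"
  proof
    assume "V \<subseteq> {u,v,w}"
    then have "card V \<le> card {u,v,w}" by (intro card_mono) auto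
    also have "\<dots> \<le> 3" by (simp add: card_insert_le_m1)
    finally show False using c4 by simp
  qed
  then obtain z where z: "z \<in> V" "z \<noteq> u" "z \<noteq> v" "z \<noteq> w" by auto
  show False
  proof (cases "F1 z = F2 z")
    case True
    then show False using L1[OF z(1) F True uw] z e1 e2 by auto
  next
    case False
    have "\<exists>j. F1 j \<noteq> F2 j \<and> flip F1 {z,j} \<in> R"
      using dm F False unfolding delta_matroid_def by metis
    then obtain j where j: "F1 j \<noteq> F2 j" "flip F1 {z,j} \<in> R" by blast
    show False
    proof (cases "j = w")
      case False
      let ?F3 = "flip F1 {z,j}"
      have "?F3 w = F1 w" using False z by (simp add: flip_def)
      then have M: "mix {u,v} F1 ?F3 \<in> R \<and> edge R (mix {u,v} F1 ?F3) u v"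
        using L2[OF inV(3) F(1) j(2)] uv uw e1 by auto
      have "mix {u,v} F1 ?F3 z = F2 z" using z \<open>F1 z \<noteq> F2 z\<close> by (auto simp: mix_def flip_def)
      then show False using L1[OF z(1) _ F(2) _ uw] M z e2 by auto
    next
      case True
      let ?G = "flip F1 {z,w}"
      have G: "?G \<in> R" using j True by simp
      have Gz: "F2 z = ?G z" using \<open>F1 z \<noteq> F2 z\<close> by (auto simp: flip_def)
      have M: "mix {v,w} F2 ?G \<in> R \<and> edge R (mix {v,w} F2 ?G) v w"
        using L2[OF z(1) F(2) G Gz] z e2 by auto
      have Mu: "mix {v,w} F2 ?G u = F1 u" using uv uw z by (auto simp: mix_def flip_def)
      have M2: "mix {v,w} (mix {v,w} F2 ?G) F1 \<in> R \<and> edge R (mix {v,w} (mix {v,w} F2 ?G) F1) v w"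
        using L2[of u "mix {v,w} F2 ?G" F1 v w] inV(1) F(1) Mu M uv uw by auto
      have "F1 z = mix {v,w} (mix {v,w} F2 ?G) F1 z" using z by (simp add: mix_def)
      then show False using L1[OF z(1) F(1) _ _ uw] M2 z e1 by auto
    qed
  qed
qed

end



definition "Eab r p1 p2 p3 \<longleftrightarrow> r (\<not>p1) (\<not>p2) p3 \<and> \<not> (r (\<not>p1) p2 p3 \<and> r p1 (\<not>p2) p3)"
definition "Eac r p1 p2 p3 \<longleftrightarrow> r (\<not>p1) p2 (\<not>p3) \<and> \<not> (r (\<not>p1) p2 p3 \<and> r p1 p2 (\<not>p3))"
definition "Ebc r p1 p2 p3 \<longleftrightarrow> r p1 (\<not>p2) (\<not>p3) \<and> \<not> (r p1 (\<not>p2) p3 \<and> r p1 p2 (\<not>p3))"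

definition "good r q1 q2 q3 \<longleftrightarrow> r (\<not>q1) q2 q3 \<and> r q1 (\<not>q2) q3 \<and> r q1 q2 (\<not>q3) \<and>
   (\<not> r q1 q2 q3 \<or> (\<forall>p1 p2 p3. r p1 p2 p3 \<longrightarrow> (p1 = q1 \<and> p2 = q2) \<or> (p1 = q1 \<and> p3 = q3) \<or> (p2 = q2 \<and> p3 = q3)))"

lemma core:
  fixes r :: "bool \<Rightarrow> bool \<Rightarrow> bool \<Rightarrow> bool"
  assumes DA: "\<forall>p1 p2 p3 q1 q2 q3. r p1 p2 p3 \<longrightarrow> r q1 q2 q3 \<longrightarrow> p1 \<noteq> q1 \<longrightarrow>
      r (\<not>p1) p2 p3 \<or> (p2 \<noteq> q2 \<and> r (\<not>p1) (\<not>p2) p3) \<or> (p3 \<noteq> q3 \<and> r (\<not>p1) p2 (\<not>p3))"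
  and DB: "\<forall>p1 p2 p3 q1 q2 q3. r p1 p2 p3 \<longrightarrow> r q1 q2 q3 \<longrightarrow> p2 \<noteq> q2 \<longrightarrow>
      r p1 (\<not>p2) p3 \<or> (p1 \<noteq> q1 \<and> r (\<not>p1) (\<not>p2) p3) \<or> (p3 \<noteq> q3 \<and> r p1 (\<not>p2) (\<not>p3))"
  and DC: "\<forall>p1 p2 p3 q1 q2 q3. r p1 p2 p3 \<longrightarrow> r q1 q2 q3 \<longrightarrow> p3 \<noteq> q3 \<longrightarrow>
      r p1 p2 (\<not>p3) \<or> (p1 \<noteq> q1 \<and> r (\<not>p1) p2 (\<not>p3)) \<or> (p2 \<noteq> q2 \<and> r p1 (\<not>p2) (\<not>p3))"
  and F: "r p1 p2 p3" "r q1 q2 q3"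
  and path: "(Eab r p1 p2 p3 \<and> Eac r q1 q2 q3) \<or> (Eab r p1 p2 p3 \<and> Ebc r q1 q2 q3) \<or> (Eac r p1 p2 p3 \<and> Ebc r q1 q2 q3)
"
  shows "\<exists>q1 q2 q3. good r q1 q2 q3"
  using assms unfolding Eab_def Eac_def Ebc_def good_def
  apply (simp only: all_bool_eq ex_bool_eq not_True_eq_False not_False_eq_True)
  apply (cases p1; cases p2; cases p3; cases q1; cases q2; cases q3)
  apply (simp_all only: simp_thms)
  apply sat+
  done

lemma core6:
  fixes r :: "bool \<Rightarrow> bool \<Rightarrow> bool \<Rightarrow> bool"
  assumes DA: "\<forall>p1 p2 p3 q1 q2 q3. r p1 p2 p3 \<longrightarrow> r q1 q2 q3 \<longrightarrow> p1 \<noteq> q1 \<longrightarrow>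
      r (\<not>p1) p2 p3 \<or> (p2 \<noteq> q2 \<and> r (\<not>p1) (\<not>p2) p3) \<or> (p3 \<noteq> q3 \<and> r (\<not>p1) p2 (\<not>p3))"
  and DB: "\<forall>p1 p2 p3 q1 q2 q3. r p1 p2 p3 \<longrightarrow> r q1 q2 q3 \<longrightarrow> p2 \<noteq> q2 \<longrightarrow>
      r p1 (\<not>p2) p3 \<or> (p1 \<noteq> q1 \<and> r (\<not>p1) (\<not>p2) p3) \<or> (p3 \<noteq> q3 \<and> r p1 (\<not>p2) (\<not>p3))"
  and DC: "\<forall>p1 p2 p3 q1 q2 q3. r p1 p2 p3 \<longrightarrow> r q1 q2 q3 \<longrightarrow> p3 \<noteq> q3 \<longrightarrow>
      r p1 p2 (\<not>p3) \<or> (p1 \<noteq> q1 \<and> r (\<not>p1) p2 (\<not>p3)) \<or> (p2 \<noteq> q2 \<and> r p1 (\<not>p2) (\<not>p3))"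
  and F: "r p1 p2 p3" "r q1 q2 q3"
  and path: "(Eab r p1 p2 p3 \<and> Eac r q1 q2 q3) \<or> (Eab r p1 p2 p3 \<and> Ebc r q1 q2 q3) \<or> (Eac r p1 p2 p3 \<and> Ebc r q1 q2 q3)
     \<or> (Eac r p1 p2 p3 \<and> Eab r q1 q2 q3) \<or> (Ebc r p1 p2 p3 \<and> Eab r q1 q2 q3) \<or> (Ebc r p1 p2 p3 \<and> Eac r q1 q2 q3)"
  shows "\<exists>q1 q2 q3. good r q1 q2 q3"
proof -
  have "(Eab r p1 p2 p3 \<and> Eac r q1 q2 q3) \<or> (Eab r p1 p2 p3 \<and> Ebc r q1 q2 q3) \<or> (Eac r p1 p2 p3 \<and> Ebc r q1 q2 q3)
     \<or> (Eab r q1 q2 q3 \<and> Eac r p1 p2 p3) \<or> (Eab r q1 q2 q3 \<and> Ebc r p1 p2 p3) \<or> (Eac r q1 q2 q3 \<and> Ebc r p1 p2 p3)"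
    using path by blast
  then show ?thesis
    using core[OF DA DB DC F] core[OF DA DB DC F(2) F(1)] by blast
qed



locale three =
  fixes a b c :: 'v and V :: "'v set" and R :: "('v \<Rightarrow> bool) set"
  assumes dist: "a \<noteq> b" "a \<noteq> c" "b \<noteq> c" and V: "V = {a,b,c}" and sub: "R \<subseteq> conf V"
begin

definition mk :: "bool \<Rightarrow> bool \<Rightarrow> bool \<Rightarrow> 'v \<Rightarrow> bool" where
  "mk p1 p2 p3 = (\<lambda>t. if t = a then p1 else if t = b then p2 else if t = c then p3 else False)"

definition rr where "rr p1 p2 p3 \<longleftrightarrow> mk p1 p2 p3 \<in> R"

lemma conf_mk: "x \<in> conf V \<Longrightarrow> x = mk (x a) (x b) (x c)"
  using V by (auto simp: conf_def mk_def fun_eq_iff)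

lemma flip_mk: "X \<subseteq> V \<Longrightarrow> flip (mk p1 p2 p3) X = mk (p1 \<noteq> (a \<in> X)) (p2 \<noteq> (b \<in> X)) (p3 \<noteq> (c \<in> X))"
  using V dist by (auto simp: flip_def mk_def fun_eq_iff)

lemma mk_a[simp]: "mk p1 p2 p3 a = p1" and mk_b[simp]: "mk p1 p2 p3 b = p2" and mk_c[simp]: "mk p1 p2 p3 c = p3"
  using dist by (auto simp: mk_def)

lemma mk_out: "t \<notin> V \<Longrightarrow> mk p1 p2 p3 t = False"
  using V by (auto simp: mk_def)

lemma DM_gen:
  assumes dm: "delta_matroid R" and xR: "mk p1 p2 p3 \<in> R" and yR: "mk q1 q2 q3 \<in> R" and i: "i \<in> V"
    and neq: "mk p1 p2 p3 i \<noteq> mk q1 q2 q3 i"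
  shows "\<exists>j\<in>V. mk p1 p2 p3 j \<noteq> mk q1 q2 q3 j \<and> flip (mk p1 p2 p3) {i,j} \<in> R"
proof -
  obtain j where j: "mk p1 p2 p3 j \<noteq> mk q1 q2 q3 j" "flip (mk p1 p2 p3) {i,j} \<in> R"
    using dm xR yR neq unfolding delta_matroid_def by metis
  have "j \<in> V" using j(1) mk_out by metis
  then show ?thesis using j by blast
qed

lemma DA: assumes dm: "delta_matroid R" shows "\<forall>p1 p2 p3 q1 q2 q3. rr p1 p2 p3 \<longrightarrow> rr q1 q2 q3 \<longrightarrow> p1 \<noteq> q1 \<longrightarrow>
      rr (\<not>p1) p2 p3 \<or> (p2 \<noteq> q2 \<and> rr (\<not>p1) (\<not>p2) p3) \<or> (p3 \<noteq> q3 \<and> rr (\<not>p1) p2 (\<not>p3))"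
proof (intro allI impI)
  fix p1 p2 p3 q1 q2 q3 assume h: "rr p1 p2 p3" "rr q1 q2 q3" "p1 \<noteq> q1"
  have xy: "mk p1 p2 p3 \<in> R" "mk q1 q2 q3 \<in> R" "a \<in> V" "mk p1 p2 p3 a \<noteq> mk q1 q2 q3 a"
    using h V unfolding rr_def by auto
  obtain j where j: "j \<in> V" "mk p1 p2 p3 j \<noteq> mk q1 q2 q3 j" "flip (mk p1 p2 p3) {a,j} \<in> R"
    using DM_gen[OF dm xy] by blast
  then show "rr (\<not>p1) p2 p3 \<or> (p2 \<noteq> q2 \<and> rr (\<not>p1) (\<not>p2) p3) \<or> (p3 \<noteq> q3 \<and> rr (\<not>p1) p2 (\<not>p3))"
    using V dist flip_mk[of "{a,j}"] unfolding rr_def by auto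
qed

lemma DB: assumes dm: "delta_matroid R" shows "\<forall>p1 p2 p3 q1 q2 q3. rr p1 p2 p3 \<longrightarrow> rr q1 q2 q3 \<longrightarrow> p2 \<noteq> q2 \<longrightarrow>
      rr p1 (\<not>p2) p3 \<or> (p1 \<noteq> q1 \<and> rr (\<not>p1) (\<not>p2) p3) \<or> (p3 \<noteq> q3 \<and> rr p1 (\<not>p2) (\<not>p3))"
proof (intro allI impI)
  fix p1 p2 p3 q1 q2 q3 assume h: "rr p1 p2 p3" "rr q1 q2 q3" "p2 \<noteq> q2"
  have xy: "mk p1 p2 p3 \<in> R" "mk q1 q2 q3 \<in> R" "b \<in> V" "mk p1 p2 p3 b \<noteq> mk q1 q2 q3 b"
    using h V unfolding rr_def by auto
  obtain j where j: "j \<in> V" "mk p1 p2 p3 j \<noteq> mk q1 q2 q3 j" "flip (mk p1 p2 p3) {b,j} \<in> R"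
    using DM_gen[OF dm xy] by blast
  then show "rr p1 (\<not>p2) p3 \<or> (p1 \<noteq> q1 \<and> rr (\<not>p1) (\<not>p2) p3) \<or> (p3 \<noteq> q3 \<and> rr p1 (\<not>p2) (\<not>p3))"
    using V dist flip_mk[of "{b,j}"] unfolding rr_def by auto
qed

lemma DC: assumes dm: "delta_matroid R" shows "\<forall>p1 p2 p3 q1 q2 q3. rr p1 p2 p3 \<longrightarrow> rr q1 q2 q3 \<longrightarrow> p3 \<noteq> q3 \<longrightarrow>
      rr p1 p2 (\<not>p3) \<or> (p1 \<noteq> q1 \<and> rr (\<not>p1) p2 (\<not>p3)) \<or> (p2 \<noteq> q2 \<and> rr p1 (\<not>p2) (\<not>p3))"
proof (intro allI impI)
  fix p1 p2 p3 q1 q2 q3 assume h: "rr p1 p2 p3" "rr q1 q2 q3" "p3 \<noteq> q3"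
  have xy: "mk p1 p2 p3 \<in> R" "mk q1 q2 q3 \<in> R" "c \<in> V" "mk p1 p2 p3 c \<noteq> mk q1 q2 q3 c"
    using h V unfolding rr_def by auto
  obtain j where j: "j \<in> V" "mk p1 p2 p3 j \<noteq> mk q1 q2 q3 j" "flip (mk p1 p2 p3) {c,j} \<in> R"
    using DM_gen[OF dm xy] by blast
  then show "rr p1 p2 (\<not>p3) \<or> (p1 \<noteq> q1 \<and> rr (\<not>p1) p2 (\<not>p3)) \<or> (p2 \<noteq> q2 \<and> rr p1 (\<not>p2) (\<not>p3))"
    using V dist flip_mk[of "{c,j}"] unfolding rr_def by auto
qed

lemma edge_mk:
  "edge R (mk p1 p2 p3) a b = Eab rr p1 p2 p3" "edge R (mk p1 p2 p3) b a = Eab rr p1 p2 p3"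
  "edge R (mk p1 p2 p3) a c = Eac rr p1 p2 p3" "edge R (mk p1 p2 p3) c a = Eac rr p1 p2 p3"
  "edge R (mk p1 p2 p3) b c = Ebc rr p1 p2 p3" "edge R (mk p1 p2 p3) c b = Ebc rr p1 p2 p3"
  unfolding edge_def Eab_def Eac_def Ebc_def rr_def
  using V dist by (auto simp: flip_mk insert_commute)

lemma good_of_path:
  assumes dm: "delta_matroid R" and np: "\<not> nopath R"
  shows "\<exists>q1 q2 q3. good rr q1 q2 q3"
proof -
  obtain F1 F2 u v w where F: "F1 \<in> R" "F2 \<in> R" "u \<noteq> w" "edge R F1 u v" "edge R F2 v w"
    using np unfolding nopath_def by blast
  have uv: "u \<noteq> v" "v \<noteq> w" using edge_neq[OF F(4)] edge_neq[OF F(5)] by auto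
  have inV: "u \<in> V" "v \<in> V" "w \<in> V" using edge_in[OF sub F(1) F(4)] edge_in[OF sub F(2) F(5)] by auto
  define p1 p2 p3 q1 q2 q3 where "p1 = F1 a" "p2 = F1 b" "p3 = F1 c" "q1 = F2 a" "q2 = F2 b" "q3 = F2 c"
  have F1eq: "F1 = mk p1 p2 p3" using conf_mk F(1) sub p1_p2_p3_q1_q2_q3_def by auto
  have F2eq: "F2 = mk q1 q2 q3" using conf_mk F(2) sub p1_p2_p3_q1_q2_q3_def by auto
  have r: "rr p1 p2 p3" "rr q1 q2 q3" using F F1eq F2eq unfolding rr_def by auto
  have e1: "edge R (mk p1 p2 p3) u v" and e2: "edge R (mk q1 q2 q3) v w" using F F1eq F2eq by auto
  have "(Eab rr p1 p2 p3 \<and> Eac rr q1 q2 q3) \<or> (Eab rr p1 p2 p3 \<and> Ebc rr q1 q2 q3) \<or> (Eac rr p1 p2 p3 \<and> Ebc rr q1 q2 q3)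
     \<or> (Eac rr p1 p2 p3 \<and> Eab rr q1 q2 q3) \<or> (Ebc rr p1 p2 p3 \<and> Eab rr q1 q2 q3) \<or> (Ebc rr p1 p2 p3 \<and> Eac rr q1 q2 q3)"
    using inV uv F(3) e1 e2 V dist edge_mk by auto
  then show ?thesis using core6[OF DA[OF dm] DB[OF dm] DC[OF dm] r] by blast
qed


lemma weight_mk: "weight V h (mk p1 p2 p3) = h a * of_bool p1 + h b * of_bool p2 + h c * of_bool p3"
  using V dist by (simp add: weight_def)

lemma finR: "finite R"
proof -
  have "R \<subseteq> (\<lambda>(p1,p2,p3). mk p1 p2 p3) ` UNIV"
  proof
    fix x assume "x \<in> R"
    then have "x = mk (x a) (x b) (x c)" using conf_mk sub by auto
    then show "x \<in> (\<lambda>(p1,p2,p3). mk p1 p2 p3) ` UNIV" by (auto intro: image_eqI[of _ _ "(x a, x b, x c)"])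
  qed
  then show ?thesis by (rule finite_subset) simp
qed

lemma hmax_good:
  assumes g: "good rr q1 q2 q3"
  shows "\<exists>h. hmax V h R = {mk (\<not>q1) q2 q3, mk q1 (\<not>q2) q3, mk q1 q2 (\<not>q3)}"
proof -
  define e :: int where "e = (if rr q1 q2 q3 then -1 else 1)"
  define h where "h t = e * (if mk q1 q2 q3 t then 1 else -1)" for t
  define m where "m = weight V h (mk (\<not>q1) q2 q3)"
  have ha: "h a = e * (if q1 then 1 else -1)" and hb: "h b = e * (if q2 then 1 else -1)"
    and hc: "h c = e * (if q3 then 1 else -1)" by (simp_all add: h_def)
  have key: "rr p1 p2 p3 \<longrightarrow> weight V h (mk p1 p2 p3) \<le> m \<and>
     (weight V h (mk p1 p2 p3) = m \<longleftrightarrow> (p1,p2,p3) \<in> {(\<not>q1,q2,q3),(q1,\<not>q2,q3),(q1,q2,\<not>q3)})" for p1 p2 p3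
    using g unfolding m_def weight_mk ha hb hc good_def e_def
    by (cases p1; cases p2; cases p3; cases q1; cases q2; cases q3; simp; blast)
  have N: "mk (\<not>q1) q2 q3 \<in> R" "mk q1 (\<not>q2) q3 \<in> R" "mk q1 q2 (\<not>q3) \<in> R"
    using g unfolding good_def rr_def by auto
  have Mx: "Max (weight V h ` R) = m"
  proof (rule Max_eqI)
    show "finite (weight V h ` R)" using finR by simp
    show "m \<in> weight V h ` R" using N(1) unfolding m_def by blast
    fix y assume "y \<in> weight V h ` R"
    then obtain x where x: "x \<in> R" "y = weight V h x" by blast
    then have "x = mk (x a) (x b) (x c)" using conf_mk sub by auto
    then show "y \<le> m" using key[of "x a" "x b" "x c"] x unfolding rr_def by metis
  qed
  have "hmax V h R = {mk (\<not>q1) q2 q3, mk q1 (\<not>q2) q3, mk q1 q2 (\<not>q3)}"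
  proof
    show "hmax V h R \<subseteq> {mk (\<not>q1) q2 q3, mk q1 (\<not>q2) q3, mk q1 q2 (\<not>q3)}"
    proof
      fix x assume "x \<in> hmax V h R"
      then have x: "x \<in> R" "weight V h x = m" unfolding hmax_def Mx by auto
      then have xe: "x = mk (x a) (x b) (x c)" using conf_mk sub by auto
      then have "(x a, x b, x c) \<in> {(\<not>q1,q2,q3),(q1,\<not>q2,q3),(q1,q2,\<not>q3)}"
        using key[of "x a" "x b" "x c"] x unfolding rr_def by metis
      then show "x \<in> {mk (\<not>q1) q2 q3, mk q1 (\<not>q2) q3, mk q1 q2 (\<not>q3)}" using xe by auto
    qed
    show "{mk (\<not>q1) q2 q3, mk q1 (\<not>q2) q3, mk q1 q2 (\<not>q3)} \<subseteq> hmax V h R"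
      using N key[of "\<not>q1" q2 q3] key[of q1 "\<not>q2" q3] key[of q1 q2 "\<not>q3"]
      unfolding hmax_def Mx rr_def by auto
  qed
  then show ?thesis by blast
qed

definition pi :: "'v \<Rightarrow> nat" where "pi t = (if t = a then 1 else if t = b then 2 else 3)"

lemma equiv_N:
  "\<exists>U \<subseteq> {1,2,3::nat}. equiv_rel V {mk (\<not>q1) q2 q3, mk q1 (\<not>q2) q3, mk q1 q2 (\<not>q3)} {1,2,3} (flip_rel PM3 U)"
proof -
  define U where "U = {i::nat. (i = 1 \<and> q1) \<or> (i = 2 \<and> q2) \<or> (i = 3 \<and> q3)}"
  have U: "U \<subseteq> {1,2,3}" unfolding U_def by auto
  define tr where "tr y = (\<lambda>v. if v \<in> V then y (pi v) else False)" for y :: "nat \<Rightarrow> bool"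
  have bij: "bij_betw pi V {1,2,3}"
    unfolding bij_betw_def inj_on_def pi_def using V dist by auto
  have fr: "flip_rel PM3 U \<inter> conf {1,2,3} = {flip (\<lambda>i. i = 1) U, flip (\<lambda>i. i = 2) U, flip (\<lambda>i. i = 3) U}"
  proof
    show "flip_rel PM3 U \<inter> conf {1,2,3} \<subseteq> {flip (\<lambda>i. i = 1) U, flip (\<lambda>i. i = 2) U, flip (\<lambda>i. i = 3) U}"
    proof
      fix y assume "y \<in> flip_rel PM3 U \<inter> conf {1,2,3}"
      then have "flip y U \<in> PM3" unfolding flip_rel_def by auto
      moreover have "flip (flip y U) U = y" by (auto simp: flip_def fun_eq_iff)
      ultimately show "y \<in> {flip (\<lambda>i. i = 1) U, flip (\<lambda>i. i = 2) U, flip (\<lambda>i. i = 3) U}"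
        unfolding PM3_def by auto
    qed
    have ff: "flip (flip y U) U = y" for y :: "nat \<Rightarrow> bool" by (auto simp: flip_def fun_eq_iff)
    show "{flip (\<lambda>i. i = 1) U, flip (\<lambda>i. i = 2) U, flip (\<lambda>i. i = 3) U} \<subseteq> flip_rel PM3 U \<inter> conf {1,2,3}"
      using U unfolding flip_rel_def PM3_def by (auto simp: ff conf_def flip_def)
  qed
  have t1: "tr (flip (\<lambda>i. i = 1) U) = mk (\<not>q1) q2 q3"
    and t2: "tr (flip (\<lambda>i. i = 2) U) = mk q1 (\<not>q2) q3"
    and t3: "tr (flip (\<lambda>i. i = 3) U) = mk q1 q2 (\<not>q3)"
    unfolding tr_def using V dist by (auto simp: fun_eq_iff flip_def pi_def U_def mk_def)
  have "{mk (\<not>q1) q2 q3, mk q1 (\<not>q2) q3, mk q1 q2 (\<not>q3)} = tr ` (flip_rel PM3 U \<inter> conf {1,2,3})"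
    unfolding fr using t1 t2 t3 by simp
  then have "equiv_rel V {mk (\<not>q1) q2 q3, mk q1 (\<not>q2) q3, mk q1 q2 (\<not>q3)} {1,2,3} (flip_rel PM3 U)"
    unfolding equiv_rel_def tr_def using bij by blast
  then show ?thesis using U by blast
qed

end

theorem mainTheorem13:
  fixes V :: "'v set" and R :: "('v \<Rightarrow> bool) set"
  assumes "finite V"
    and "R \<subseteq> conf V"
    and "delta_matroid R"
    and "\<not> basically_binary V R"
    and "\<And>D p. D \<subseteq> V \<Longrightarrow> D \<noteq> {} \<Longrightarrow> p \<in> conf D \<Longrightarrow>
           basically_binary (V - D) (pinning D p R)"
  shows "\<exists>h :: 'v \<Rightarrow> int. \<exists>U \<subseteq> {1, 2, 3 :: nat}.
           equiv_rel V (hmax V h R) {1, 2, 3} (flip_rel PM3 U)"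
proof -
  have nobb: "\<not> nopath R"
  proof
    assume "nopath R"
    then have "basically_binary V R" using nopath_bb assms(1,2,3) by blast
    then show False using assms(4) by simp
  qed
  have hyp: "basically_binary (V - {z}) (sl z c R)" if z: "z \<in> V" for z c
  proof -
    have "(\<lambda>t. t = z \<and> c) \<in> conf {z}" by (auto simp: conf_def)
    then show ?thesis unfolding sl_def using assms(5)[of "{z}"] z by auto
  qed
  have c3: "card V = 3"
  proof -
    have "\<not> card V \<ge> 4"
      using nopath_big[OF assms(1,2) hyp assms(3)] nobb by blast
    moreover have "\<not> card V \<le> 2"
    proof
      assume c2: "card V \<le> 2"
      have "basically_binary V R"
        unfolding basically_binary_def
      proof (intro exI[of _ "{V}"] exI[of _ "\<lambda>_. R"] conjI)
        have "restr x V = x" if "x \<in> conf V" for x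
          using that by (auto simp: restr_def conf_def fun_eq_iff)
        then show "R = {x \<in> conf V. \<forall>B\<in>{V}. restr x B \<in> R}" using assms(2) by auto
      qed (use c2 assms(2) in auto)
      then show False using assms(4) by simp
    qed
    ultimately show ?thesis by simp
  qed
  then obtain a b c where abc: "V = {a,b,c}" "a \<noteq> b" "a \<noteq> c" "b \<noteq> c"
    by (auto simp: card_3_iff)
  interpret three a b c V R using abc assms(2) by unfold_locales auto
  obtain q1 q2 q3 where g: "good rr q1 q2 q3" using good_of_path[OF assms(3) nobb] by blast
  obtain h where h: "hmax V h R = {mk (\<not>q1) q2 q3, mk q1 (\<not>q2) q3, mk q1 q2 (\<not>q3)}"
    using hmax_good[OF g] by blast
  show ?thesis using equiv_N[of q1 q2 q3] h by metis
qed

end
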